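(* Let $W=\mathfrak{S}_n$, $1\le c\le n-2$, and let $w_2\in\mathfrak{S}_n$ with $w_2^2=1$. Suppose $\ell(s_{c+1}s_cw_2s_cs_{c+1})=\ell(w_2)+4$, $s_cw_2\ne w_2s_c$, $s_{c+1}s_cw_2s_c\neq s_cw_2s_cs_{c+1}$ and $s_{c+1}w_2s_cs_{c+1}<w_2s_cs_{c+1}$. Then $s_{c+1}w_2<w_2$, and either $s_{c+1}w_2=w_2s_{c+1}$ or $s_{c+1}w_2s_{c+1}<s_{c+1}w_2$.
   Context: $s_j=(j,j+1)$; $\ell$ is the Coxeter length of $\mathfrak{S}_n$ and $<$ is the Bruhat order. *)

theory Defs
  imports "HOL-Combinatorics.Combinatorics"
begin

text \<open>Permutations of S_n are functions p with p permutes {1..n}; the product uv is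
  composition u \<circ> v, i.e. (uv)(i) = u(v(i)).\<close>

definition s :: "nat \<Rightarrow> nat \<Rightarrow> nat" where
  "s j = transpose j (Suc j)"

definition len :: "nat \<Rightarrow> (nat \<Rightarrow> nat) \<Rightarrow> nat" where
  "len n w = card {(i, j). i \<in> {1..n} \<and> j \<in> {1..n} \<and> i < j \<and> w j < w i}"

definition bruhat_step :: "nat \<Rightarrow> ((nat \<Rightarrow> nat) \<times> (nat \<Rightarrow> nat)) set" where
  "bruhat_step n = {(x, x \<circ> transpose i j) | x i j. x permutes {1..n} \<and>
      i \<in> {1..n} \<and> j \<in> {1..n} \<and> i < j \<and> len n x < len n (x \<circ> transpose i j)}"

definition bruhat_lt :: "nat \<Rightarrow> (nat \<Rightarrow> nat) \<Rightarrow> (nat \<Rightarrow> nat) \<Rightarrow> bool" where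
  "bruhat_lt n u w \<longleftrightarrow> (u, w) \<in> (bruhat_step n)\<^sup>+"

end

theory Submission imports Defs begin

definition invs :: "nat \<Rightarrow> (nat \<Rightarrow> nat) \<Rightarrow> (nat \<times> nat) set" where
  "invs n w = {(i, j). i \<in> {1..n} \<and> j \<in> {1..n} \<and> i < j \<and> w j < w i}"

lemma len_invs: "len n w = card (invs n w)"
  by (simp add: len_def invs_def)

lemma finite_invs: "finite (invs n w)"
  by (rule finite_subset[of _ "{1..n} \<times> {1..n}"]) (auto simp: invs_def)

lemma s_lt: "u \<noteq> v \<Longrightarrow> (s j v < s j u) \<longleftrightarrow> (v < u \<and> \<not>(u = Suc j \<and> v = j)) \<or> (u = j \<and> v = Suc j)"
  by (auto simp: s_def transpose_def)

lemma s_in: "1 \<le> j \<Longrightarrow> Suc j \<le> n \<Longrightarrow> (s j a \<in> {1..n}) = (a \<in> {1..n})"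
  by (auto simp: s_def transpose_def)

lemma ss[simp]: "s j (s j a) = a"
  by (simp add: s_def)

lemma left_up:
  assumes x: "x permutes {1..n}" and xp: "x p = j" and xq: "x q = Suc j"
    and pq: "p < q" and p: "p \<in> {1..n}" and q: "q \<in> {1..n}"
  shows "len n (s j \<circ> x) = Suc (len n x)"
proof -
  have inj: "inj x" using permutes_inj[OF x] .
  have ep: "\<And>a. x a = j \<longleftrightarrow> a = p" using inj xp by (metis injD)
  have eq: "\<And>a. x a = Suc j \<longleftrightarrow> a = q" using inj xq by (metis injD)
  have key: "\<And>a b. a < b \<Longrightarrow> (s j (x b) < s j (x a)) \<longleftrightarrow> x b < x a \<or> (a = p \<and> b = q)"
  proof -
    fix a b :: nat assume ab: "a < b"
    then have "x a \<noteq> x b" using inj by (metis injD less_irrefl)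
    then have "(s j (x b) < s j (x a)) \<longleftrightarrow> (x b < x a \<and> \<not>(x a = Suc j \<and> x b = j)) \<or> (x a = j \<and> x b = Suc j)"
      by (rule s_lt)
    then show "(s j (x b) < s j (x a)) \<longleftrightarrow> x b < x a \<or> (a = p \<and> b = q)"
      using ep eq ab pq xp xq by auto
  qed
  have "invs n (s j \<circ> x) = insert (p,q) (invs n x)"
    unfolding invs_def using key p q pq by auto
  moreover have "(p,q) \<notin> invs n x" using xp xq by (auto simp: invs_def)
  ultimately show ?thesis using finite_invs by (simp add: len_invs)
qed

lemma right_up:
  assumes x: "x permutes {1..n}" and j: "1 \<le> j" "Suc j \<le> n" and lt: "x j < x (Suc j)"
  shows "len n (x \<circ> s j) = Suc (len n x)"
proof -
  let ?g = "\<lambda>(a,b). (s j a, s j b)"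
  have "invs n (x \<circ> s j) = insert (j, Suc j) (?g ` invs n x)"
  proof (rule set_eqI, rule iffI)
    fix ab assume "ab \<in> invs n (x \<circ> s j)"
    then obtain a b where ab: "ab = (a,b)" "a \<in> {1..n}" "b \<in> {1..n}" "a < b" "x (s j b) < x (s j a)"
      by (auto simp: invs_def)
    show "ab \<in> insert (j, Suc j) (?g ` invs n x)"
    proof (cases "ab = (j, Suc j)")
      case True then show ?thesis by simp
    next
      case False
      have "a \<noteq> b" using ab by simp
      from s_lt[OF this[symmetric], of j] False ab
      have "s j a < s j b" by auto
      moreover have "s j a \<in> {1..n}" "s j b \<in> {1..n}" using ab s_in[OF j] by blast+
      ultimately have "(s j a, s j b) \<in> invs n x"
        using ab(5) unfolding invs_def by simp
      moreover have "ab = ?g (s j a, s j b)" using ab by simp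
      ultimately show ?thesis by blast
    qed
  next
    fix ab assume "ab \<in> insert (j, Suc j) (?g ` invs n x)"
    then consider "ab = (j, Suc j)" | a b where "ab = (s j a, s j b)" "(a,b) \<in> invs n x" by auto
    then show "ab \<in> invs n (x \<circ> s j)"
    proof cases
      case 1 then show ?thesis using j lt by (auto simp: invs_def s_def)
    next
      case 2
      then have ab: "a \<in> {1..n}" "b \<in> {1..n}" "a < b" "x b < x a" by (auto simp: invs_def)
      have "(a,b) \<noteq> (j, Suc j)" using ab lt by auto
      have "a \<noteq> b" using ab by simp
      from s_lt[OF this[symmetric], of j] \<open>(a,b) \<noteq> (j, Suc j)\<close> ab
      have "s j a < s j b" by auto
      moreover have "s j a \<in> {1..n}" "s j b \<in> {1..n}" using ab s_in[OF j] by blast+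
      ultimately show ?thesis using 2 ab unfolding invs_def by simp
    qed
  qed
  moreover have "(j, Suc j) \<notin> ?g ` invs n x"
  proof
    assume "(j, Suc j) \<in> ?g ` invs n x"
    then obtain a b where "(a,b) \<in> invs n x" "s j a = j" "s j b = Suc j" by auto
    then show False by (auto simp: invs_def s_def transpose_def split: if_splits)
  qed
  moreover have "inj_on ?g (invs n x)"
    by (auto simp: inj_on_def s_def dest: transpose_eq_imp_eq)
  ultimately show ?thesis using finite_invs by (simp add: len_invs card_image)
qed

lemma s_permutes: "1 \<le> j \<Longrightarrow> Suc j \<le> n \<Longrightarrow> s j permutes {1..n}"
  unfolding s_def by (rule permutes_swap_id) auto

lemma ss_comp: "s j \<circ> (s j \<circ> x) = x" "(x \<circ> s j) \<circ> s j = x"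
  by (auto simp: fun_eq_iff)

lemma left_down:
  assumes x: "x permutes {1..n}" and j: "1 \<le> j" "Suc j \<le> n" and xp: "x p = j" and xq: "x q = Suc j"
    and pq: "q < p" and p: "p \<in> {1..n}" and q: "q \<in> {1..n}"
  shows "len n x = Suc (len n (s j \<circ> x))"
proof -
  have y: "s j \<circ> x permutes {1..n}" using permutes_compose[OF x s_permutes[OF j]] .
  have "len n (s j \<circ> (s j \<circ> x)) = Suc (len n (s j \<circ> x))"
    by (rule left_up[OF y _ _ pq q p]) (use xp xq in \<open>auto simp: s_def\<close>)
  then show ?thesis by (simp add: ss_comp)
qed

lemma right_down:
  assumes x: "x permutes {1..n}" and j: "1 \<le> j" "Suc j \<le> n" and lt: "x (Suc j) < x j"
  shows "len n x = Suc (len n (x \<circ> s j))"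
proof -
  have y: "x \<circ> s j permutes {1..n}" using permutes_compose[OF s_permutes[OF j] x] .
  have "len n ((x \<circ> s j) \<circ> s j) = Suc (len n (x \<circ> s j))"
    by (rule right_up[OF y j]) (use lt in \<open>auto simp: s_def\<close>)
  then show ?thesis by (simp add: ss_comp)
qed

lemma right_le:
  assumes x: "x permutes {1..n}" and j: "1 \<le> j" "Suc j \<le> n"
  shows "len n (x \<circ> s j) \<le> Suc (len n x)"
proof -
  have "x j \<noteq> x (Suc j)" using permutes_inj[OF x] by (metis injD n_not_Suc_n)
  then show ?thesis using right_up[OF x j] right_down[OF x j] by (cases "x j < x (Suc j)") auto
qed

lemma left_le:
  assumes x: "x permutes {1..n}" and j: "1 \<le> j" "Suc j \<le> n"
  shows "len n (s j \<circ> x) \<le> Suc (len n x)"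
proof -
  have im: "x ` {1..n} = {1..n}" using permutes_image[OF x] .
  obtain p where p: "p \<in> {1..n}" "x p = j" using j im by (metis atLeastAtMost_iff imageE le_SucI Suc_le_D order.trans le_refl)
  obtain q where q: "q \<in> {1..n}" "x q = Suc j" using j im by (metis atLeastAtMost_iff imageE le_SucI)
  have "p \<noteq> q" using p q by auto
  then show ?thesis using left_up[OF x p(2) q(2) _ p(1) q(1)] left_down[OF x j p(2) q(2) _ p(1) q(1)]
    by (cases "p < q") auto
qed

lemma step_len: "(u, v) \<in> bruhat_step n \<Longrightarrow> len n u < len n v"
  by (auto simp: bruhat_step_def)

lemma bruhat_len: "bruhat_lt n u v \<Longrightarrow> len n u < len n v"
  unfolding bruhat_lt_def
proof (induction rule: trancl_induct)
  case (base y) then show ?case by (rule step_len)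
next
  case (step y z) then show ?case using step_len less_trans by blast
qed

lemma bruhat_intro:
  assumes "u permutes {1..n}" "i \<in> {1..n}" "j \<in> {1..n}" "i < j" "v = u \<circ> transpose i j"
    "len n u < len n v"
  shows "bruhat_lt n u v"
  unfolding bruhat_lt_def
  by (rule r_into_trancl) (use assms in \<open>unfold bruhat_step_def, blast\<close>)

theorem lemma2p17:
  fixes n c :: nat and w2 :: "nat \<Rightarrow> nat"
  assumes "1 \<le> c" and "c + 2 \<le> n"
    and "w2 permutes {1..n}" and "w2 \<circ> w2 = id"
    and "len n (s (c+1) \<circ> s c \<circ> w2 \<circ> s c \<circ> s (c+1)) = len n w2 + 4"
    and "s c \<circ> w2 \<noteq> w2 \<circ> s c"
    and "s (c+1) \<circ> s c \<circ> w2 \<circ> s c \<noteq> s c \<circ> w2 \<circ> s c \<circ> s (c+1)"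
    and "bruhat_lt n (s (c+1) \<circ> w2 \<circ> s c \<circ> s (c+1)) (w2 \<circ> s c \<circ> s (c+1))"
  shows "bruhat_lt n (s (c+1) \<circ> w2) w2 \<and>
         (s (c+1) \<circ> w2 = w2 \<circ> s (c+1) \<or>
          bruhat_lt n (s (c+1) \<circ> w2 \<circ> s (c+1)) (s (c+1) \<circ> w2))"
proof -
  let ?a = "s c" and ?b = "s (Suc c)"
  define w where "w = w2"
  have w: "w permutes {1..n}" using assms(3) by (simp add: w_def)
  have ww: "\<And>k. w (w k) = k" using assms(4) unfolding w_def by (metis comp_apply id_apply)
  have inj: "inj w" using permutes_inj[OF w] .
  have j1: "1 \<le> c" "Suc c \<le> n" using assms(1,2) by auto
  have j2: "1 \<le> Suc c" "Suc (Suc c) \<le> n" using assms(1,2) by auto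
  have pa: "?a permutes {1..n}" by (rule s_permutes[OF j1])
  have pb: "?b permutes {1..n}" by (rule s_permutes[OF j2])
  have wa: "w \<circ> ?a permutes {1..n}" using permutes_compose[OF pa w] .
  have wab: "w \<circ> ?a \<circ> ?b permutes {1..n}" using permutes_compose[OF pb wa] .
  have awab: "?a \<circ> (w \<circ> ?a \<circ> ?b) permutes {1..n}" using permutes_compose[OF wab pa] .
  have h5: "len n (?b \<circ> (?a \<circ> (w \<circ> ?a \<circ> ?b))) = len n w + 4"
    using assms(5) unfolding w_def by (simp add: comp_assoc)
  have chain: "len n (?b \<circ> (?a \<circ> (w \<circ> ?a \<circ> ?b))) \<le> Suc (Suc (len n (w \<circ> ?a \<circ> ?b)))"
    using left_le[OF awab j2] left_le[OF wab j1] by simp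
  define x where "x = w c"
  define y where "y = w (Suc c)"
  define z where "z = w (Suc (Suc c))"
  have wx: "w x = c" "w y = Suc c" "w z = Suc (Suc c)" by (simp_all add: x_def y_def z_def ww)
  have yz: "y \<noteq> z" "x \<noteq> y" "x \<noteq> z"
  proof -
    show "y \<noteq> z" using wx(2,3) by (metis n_not_Suc_n)
    show "x \<noteq> y" using wx(1,2) by (metis n_not_Suc_n)
    show "x \<noteq> z" using wx(1,3) by (metis Suc_n_not_le_n le_SucI le_refl)
  qed
  have rng: "x \<in> {1..n}" "y \<in> {1..n}" "z \<in> {1..n}"
    unfolding x_def y_def z_def using permutes_in_image[OF w] j1 j2 by auto
  have xy: "x < y"
  proof (rule ccontr)
    assume "\<not> x < y"
    then have "w (Suc c) < w c" using yz by (simp add: x_def y_def)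
    then have "len n w = Suc (len n (w \<circ> ?a))" by (rule right_down[OF w j1])
    moreover have "len n (w \<circ> ?a \<circ> ?b) \<le> Suc (len n (w \<circ> ?a))" by (rule right_le[OF wa j2])
    ultimately show False using h5 chain by linarith
  qed
  have xz: "x < z"
  proof (rule ccontr)
    assume "\<not> x < z"
    then have "(w \<circ> ?a) (Suc (Suc c)) < (w \<circ> ?a) (Suc c)" using yz by (simp add: x_def z_def s_def)
    then have "len n (w \<circ> ?a) = Suc (len n (w \<circ> ?a \<circ> ?b))" by (rule right_down[OF wa j2])
    moreover have "len n (w \<circ> ?a) \<le> Suc (len n w)" by (rule right_le[OF w j1])
    ultimately show False using h5 chain by linarith
  qed
  have h8: "len n (?b \<circ> (w \<circ> ?a \<circ> ?b)) < len n (w \<circ> ?a \<circ> ?b)"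
    using bruhat_len[OF assms(8)] unfolding w_def by (simp add: comp_assoc)
  have QP: "?b (?a z) < ?b (?a y)"
  proof (rule ccontr)
    assume "\<not> ?b (?a z) < ?b (?a y)"
    moreover have "?b (?a z) \<noteq> ?b (?a y)" using yz by (auto simp: s_def dest: transpose_eq_imp_eq)
    ultimately have "?b (?a y) < ?b (?a z)" by simp
    moreover have "?b (?a y) \<in> {1..n}" "?b (?a z) \<in> {1..n}" using rng s_in[OF j1] s_in[OF j2] by auto
    moreover have "(w \<circ> ?a \<circ> ?b) (?b (?a y)) = Suc c" "(w \<circ> ?a \<circ> ?b) (?b (?a z)) = Suc (Suc c)"
      using wx by simp_all
    ultimately have "len n (?b \<circ> (w \<circ> ?a \<circ> ?b)) = Suc (len n (w \<circ> ?a \<circ> ?b))"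
      using left_up[OF wab] by blast
    then show False using h8 by simp
  qed
  have yc: "y = c \<Longrightarrow> x = Suc c" using wx ww unfolding x_def by metis
  have zy: "z < y"
    using QP xy yc yz by (auto simp: s_def transpose_def split: if_splits)
  have notin: "\<And>k. k \<noteq> y \<Longrightarrow> k \<noteq> z \<Longrightarrow> w k \<noteq> Suc c \<and> w k \<noteq> Suc (Suc c)"
    using wx ww by metis
  have bw: "?b \<circ> w permutes {1..n}" using permutes_compose[OF w pb] .
  have c1: "bruhat_lt n (?b \<circ> w) w"
  proof (rule bruhat_intro[OF bw rng(3) rng(2) zy])
    show "w = ?b \<circ> w \<circ> transpose z y"
    proof
      fix k show "w k = (?b \<circ> w \<circ> transpose z y) k"
        using wx notin[of k] by (cases "k = y"; cases "k = z") (auto simp: s_def)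
    qed
    have "len n (?b \<circ> (?b \<circ> w)) = Suc (len n (?b \<circ> w))"
      by (rule left_up[OF bw _ _ zy rng(3) rng(2)]) (use wx in \<open>auto simp: s_def\<close>)
    then show "len n (?b \<circ> w) < len n w" by (simp add: ss_comp)
  qed
  have c2: "?b \<circ> w = w \<circ> ?b \<or> bruhat_lt n (?b \<circ> w \<circ> ?b) (?b \<circ> w)"
  proof (cases "y = Suc (Suc c) \<and> z = Suc c")
    case True
    have "?b \<circ> w = w \<circ> ?b"
    proof
      fix k show "(?b \<circ> w) k = (w \<circ> ?b) k"
        using True wx notin[of k] by (cases "k = y"; cases "k = z") (auto simp: s_def)
    qed
    then show ?thesis by simp
  next
    case False
    have bzy: "?b z < ?b y" using False zy by (auto simp: s_def transpose_def)
    have U: "?b \<circ> w \<circ> ?b permutes {1..n}" using permutes_compose[OF pb bw] .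
    have "bruhat_lt n (?b \<circ> w \<circ> ?b) (?b \<circ> w)"
    proof (rule bruhat_intro[OF U])
      show "Suc c \<in> {1..n}" "Suc (Suc c) \<in> {1..n}" "Suc c < Suc (Suc c)" using j2 by auto
      show "?b \<circ> w = ?b \<circ> w \<circ> ?b \<circ> transpose (Suc c) (Suc (Suc c))"
        by (auto simp: fun_eq_iff s_def)
      have "len n ((?b \<circ> w \<circ> ?b) \<circ> ?b) = Suc (len n (?b \<circ> w \<circ> ?b))"
        by (rule right_up[OF U j2]) (use bzy wx in \<open>simp add: s_def y_def z_def\<close>)
      then show "len n (?b \<circ> w \<circ> ?b) < len n (?b \<circ> w)"
        by (simp only: ss_comp)
    qed
    then show ?thesis by simp
  qed
  show ?thesis using c1 c2 unfolding w_def by simp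
qed

end
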